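(* For fixed positive integers $x$ and $y$, the expected number of isolated vertices in the task-dependency graph generated by the $(x,y)$ edge-addition process on $n$ vertices is $o(1)$ as $n\to\infty$.
   Context: A task-dependency graph is a finite directed acyclic graph (no loops, no multiple edges). A vertex is initial if it has in-degree $0$ and terminal if it has out-degree $0$ (an isolated vertex is both). An $(x,y)$ task-dependency graph has exactly $x$ initial and exactly $y$ terminal vertices. The $(x,y)$ edge-addition process on $n$ vertices: start with the empty graph on $\{1,\dots,n\}$ and repeatedly add, uniformly at random, an edge $(a,b)$ with $a<b$ not yet present; if an addition would cause fewer than $x$ initial vertices or fewer than $y$ terminal vertices, it is cancelled. The process halts if the graph after some edge addition is an $(x,y)$ task-dependency graph, or if no more edges can be added; the result is the final graph. *)

theory Defs
  imports "HOL-Probability.Probability"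
begin

text \<open>A graph on the vertex set {1..n} is a set of directed edges (a,b) with a < b.\<close>

definition pairs :: "nat \<Rightarrow> (nat \<times> nat) set" where
  "pairs n = {(a, b). 1 \<le> a \<and> a < b \<and> b \<le> n}"

definition initial_vertices :: "nat \<Rightarrow> (nat \<times> nat) set \<Rightarrow> nat set" where
  "initial_vertices n G = {v \<in> {1..n}. \<not> (\<exists>u. (u, v) \<in> G)}"

definition terminal_vertices :: "nat \<Rightarrow> (nat \<times> nat) set \<Rightarrow> nat set" where
  "terminal_vertices n G = {v \<in> {1..n}. \<not> (\<exists>w. (v, w) \<in> G)}"

definition isolated_vertices :: "nat \<Rightarrow> (nat \<times> nat) set \<Rightarrow> nat set" where
  "isolated_vertices n G = initial_vertices n G \<inter> terminal_vertices n G"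

definition is_tdg :: "nat \<Rightarrow> nat \<Rightarrow> nat \<Rightarrow> (nat \<times> nat) set \<Rightarrow> bool" where
  "is_tdg n x y G \<longleftrightarrow> card (initial_vertices n G) = x \<and> card (terminal_vertices n G) = y"

text \<open>Edges whose addition would not be cancelled.\<close>
definition allowed :: "nat \<Rightarrow> nat \<Rightarrow> nat \<Rightarrow> (nat \<times> nat) set \<Rightarrow> (nat \<times> nat) set" where
  "allowed n x y G = {e \<in> pairs n - G.
      x \<le> card (initial_vertices n (insert e G)) \<and> y \<le> card (terminal_vertices n (insert e G))}"

text \<open>The process with a step budget k. Choosing uniformly among non-present edges and
  cancelling forbidden ones is the same as choosing uniformly among allowed edges.\<close>
fun run :: "nat \<Rightarrow> nat \<Rightarrow> nat \<Rightarrow> nat \<Rightarrow> (nat \<times> nat) set \<Rightarrow> (nat \<times> nat) set pmf" where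
  "run n x y 0 G = return_pmf G"
| "run n x y (Suc k) G =
     (if is_tdg n x y G \<or> allowed n x y G = {} then return_pmf G
      else pmf_of_set (allowed n x y G) \<bind> (\<lambda>e. run n x y k (insert e G)))"

text \<open>Each step adds a new edge from pairs n, so card (pairs n) steps suffice.\<close>
definition final_graph :: "nat \<Rightarrow> nat \<Rightarrow> nat \<Rightarrow> (nat \<times> nat) set pmf" where
  "final_graph n x y = run n x y (card (pairs n)) {}"

end

theory Submission
  imports Defs "HOL-Real_Asymp.Real_Asymp"
begin


lemma init_insert: "initial_vertices n (insert (a,b) G) = initial_vertices n G - {b}"
  unfolding initial_vertices_def by auto
lemma term_insert: "terminal_vertices n (insert (a,b) G) = terminal_vertices n G - {a}"
  unfolding terminal_vertices_def by auto
lemma iso_insert: "isolated_vertices n (insert (a,b) G) = isolated_vertices n G - {a,b}"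
  unfolding isolated_vertices_def using init_insert term_insert by auto
lemma iso_mono: "G \<subseteq> G' \<Longrightarrow> isolated_vertices n G' \<subseteq> isolated_vertices n G"
  unfolding isolated_vertices_def initial_vertices_def terminal_vertices_def by auto
lemma finite_pairs: "finite (pairs n)"
  by (rule finite_subset[of _ "{1..n} \<times> {1..n}"]) (auto simp: pairs_def)
lemma allowed_sub: "allowed n x y G \<subseteq> pairs n - G"
  unfolding allowed_def by auto

lemma set_run: "set_pmf (run n x y k G) \<subseteq> {G'. G \<subseteq> G' \<and> G' \<subseteq> G \<union> pairs n}"
proof (induction k arbitrary: G)
  case 0 then show ?case by simp
next
  case (Suc k)
  show ?case
  proof (cases "is_tdg n x y G \<or> allowed n x y G = {}")
    case True then show ?thesis by simp
  next
    case False
    have fin: "finite (allowed n x y G)" using allowed_sub finite_pairs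
      by (meson finite_Diff finite_subset)
    have eq: "run n x y (Suc k) G = pmf_of_set (allowed n x y G) \<bind> (\<lambda>e. run n x y k (insert e G))"
      using False by simp
    show ?thesis unfolding eq using False fin allowed_sub[of n x y G]
      apply (simp add: set_bind_pmf)
      using Suc.IH by blast
  qed
qed

lemma fin_iso: "finite (isolated_vertices n G)"
  by (rule finite_subset[of _ "{1..n}"]) (auto simp: isolated_vertices_def initial_vertices_def)
lemma card_iso_le: "card (isolated_vertices n G) \<le> n"
proof -
  have "isolated_vertices n G \<subseteq> {1..n}" unfolding isolated_vertices_def initial_vertices_def by auto
  then show ?thesis by (metis card_atLeastAtMost card_mono diff_Suc_1 finite_atLeastAtMost)
qed

lemma exp_le:
  fixes g :: "'a \<Rightarrow> real"
  assumes "\<And>z. z \<in> set_pmf p \<Longrightarrow> g z \<le> C" "\<And>z. 0 \<le> g z" "\<And>z. g z \<le> B"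
  shows "measure_pmf.expectation p g \<le> C"
proof (rule measure_pmf.integral_le_const)
  show "integrable (measure_pmf p) g"
    by (rule measure_pmf.integrable_const_bound[where B=B]) (use assms in auto)
  show "AE z in measure_pmf p. g z \<le> C" using assms by (simp add: AE_measure_pmf_iff)
qed

lemma exp_run_le_f:
  "measure_pmf.expectation (run n x y k G) (\<lambda>G. real (card (isolated_vertices n G)))
     \<le> real (card (isolated_vertices n G))"
proof (rule exp_le[where B = "real n"])
  fix z assume "z \<in> set_pmf (run n x y k G)"
  then have "G \<subseteq> z" using set_run by blast
  then show "real (card (isolated_vertices n z)) \<le> real (card (isolated_vertices n G))"
    using iso_mono[of G z n] by (simp add: card_mono fin_iso)
qed (use card_iso_le in auto)


lemma pairs_Suc: "pairs (Suc n) = pairs n \<union> (\<lambda>a. (a, Suc n)) ` {1..n}"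
  unfolding pairs_def by auto

lemma card_pairs: "2 * card (pairs n) = n * (n - 1)"
proof (induction n)
  case 0
  have "pairs 0 = {}" unfolding pairs_def by auto
  then show ?case by simp
next
  case (Suc n)
  have d: "pairs n \<inter> (\<lambda>a. (a, Suc n)) ` {1..n} = {}" unfolding pairs_def by auto
  have "card (pairs (Suc n)) = card (pairs n) + n"
    unfolding pairs_Suc using d finite_pairs
    by (simp add: card_Un_disjoint card_image inj_on_def)
  then show ?case using Suc.IH by (cases n) (auto simp: algebra_simps)
qed

definition star :: "nat \<Rightarrow> nat \<Rightarrow> (nat \<times> nat) set" where
  "star n v = {e \<in> pairs n. fst e = v \<or> snd e = v}"

lemma card_star: assumes "v \<in> {1..n}" shows "card (star n v) = n - 1"
proof -
  have eq: "star n v = (\<lambda>a. (a, v)) ` {1..<v} \<union> (\<lambda>b. (v, b)) ` {v<..n}"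
    using assms unfolding star_def pairs_def by auto
  have d: "(\<lambda>a. (a, v)) ` {1..<v} \<inter> (\<lambda>b. (v, b)) ` {v<..n} = {}" by auto
  have "card (star n v) = (v - 1) + (n - v)"
    unfolding eq using d by (simp add: card_Un_disjoint card_image inj_on_def)
  then show ?thesis using assms by auto
qed

lemma sum_iso:
  assumes G: "G \<subseteq> pairs n"
  shows "(\<Sum>e\<in>pairs n - G. real (card (isolated_vertices n (insert e G))))
       = real (card (isolated_vertices n G)) * (real (card (pairs n - G)) - real (n - 1))"
proof -
  let ?A = "pairs n - G" and ?I = "isolated_vertices n G"
  have finA: "finite ?A" using finite_pairs by auto
  have c1: "real (card (isolated_vertices n (insert e G))) = (\<Sum>v\<in>?I. if e \<notin> star n v then 1 else 0)"
    if "e \<in> ?A" for e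
  proof -
    obtain a b where e: "e = (a,b)" by force
    have "isolated_vertices n (insert e G) = {v \<in> ?I. e \<notin> star n v}"
      using that unfolding e iso_insert star_def by auto
    then show ?thesis using fin_iso[of n G] by (simp add: sum.If_cases Int_def)
  qed
  have c2: "(\<Sum>e\<in>?A. (if e \<notin> star n v then 1 else 0::real)) = real (card ?A) - real (n - 1)"
    if v: "v \<in> ?I" for v
  proof -
    have sub: "star n v \<subseteq> ?A" using v G unfolding star_def isolated_vertices_def initial_vertices_def
        terminal_vertices_def by force
    have vn: "v \<in> {1..n}" using v unfolding isolated_vertices_def initial_vertices_def by auto
    have "(\<Sum>e\<in>?A. (if e \<notin> star n v then 1 else 0::real)) = real (card (?A - star n v))" using finA by (simp add: sum.If_cases Diff_eq Compl_eq)
    also have "\<dots> = real (card ?A) - real (card (star n v))"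
      using sub finA by (simp add: card_Diff_subset finite_subset card_mono of_nat_diff)
    finally show ?thesis using card_star[OF vn] by simp
  qed
  have "(\<Sum>e\<in>?A. real (card (isolated_vertices n (insert e G))))
       = (\<Sum>e\<in>?A. \<Sum>v\<in>?I. if e \<notin> star n v then 1 else 0)"
    using c1 by (rule sum.cong[OF refl])
  also have "\<dots> = (\<Sum>v\<in>?I. \<Sum>e\<in>?A. if e \<notin> star n v then 1 else 0)"
    by (rule sum.swap)
  also have "\<dots> = (\<Sum>v\<in>?I. real (card ?A) - real (n - 1))"
    using c2 by (rule sum.cong[OF refl])
  finally show ?thesis by simp
qed


definition marked :: "nat \<Rightarrow> nat \<Rightarrow> (nat \<times> nat) set \<Rightarrow> bool" where
  "marked n kk G = (\<exists>e\<in>G. snd e \<le> kk \<or> n + 1 \<le> fst e + kk)"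

lemma unmarked_good:
  assumes "kk \<le> n" "\<not> marked n kk G"
  shows "kk \<le> card (initial_vertices n G) \<and> kk \<le> card (terminal_vertices n G)"
proof
  have "{1..kk} \<subseteq> initial_vertices n G" using assms unfolding marked_def initial_vertices_def by force
  moreover have "finite (initial_vertices n G)" unfolding initial_vertices_def by auto
  ultimately show "kk \<le> card (initial_vertices n G)" by (metis card_atLeastAtMost card_mono diff_Suc_1)
next
  have "{n+1-kk..n} \<subseteq> terminal_vertices n G" using assms unfolding marked_def terminal_vertices_def by force
  moreover have "finite (terminal_vertices n G)" unfolding terminal_vertices_def by auto
  ultimately show "kk \<le> card (terminal_vertices n G)" using assms(1)
    by (metis card_atLeastAtMost card_mono diff_diff_cancel le_SucI Suc_eq_plus1 diff_Suc_Suc)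
qed

lemma card_marked_pairs:
  "card {e\<in>pairs n. snd e \<le> kk \<or> n + 1 \<le> fst e + kk} \<le> 2 * kk^2"
proof -
  have "{e\<in>pairs n. snd e \<le> kk \<or> n + 1 \<le> fst e + kk} \<subseteq> {1..kk} \<times> {1..kk} \<union> {n+1-kk..n} \<times> {n+1-kk..n}"
    unfolding pairs_def by auto
  then have "card {e\<in>pairs n. snd e \<le> kk \<or> n + 1 \<le> fst e + kk} \<le> card ({1..kk} \<times> {1..kk} \<union> {n+1-kk..n} \<times> {n+1-kk..n})"
    by (intro card_mono) auto
  also have "\<dots> \<le> card ({1..kk} \<times> {1..kk}) + card ({n+1-kk..n} \<times> {n+1-kk..n})" by (rule card_Un_le)
  also have "\<dots> \<le> kk^2 + kk^2" by (simp add: card_cartesian_product power2_eq_square mult_le_mono)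
  finally show ?thesis by simp
qed

lemma good_step:
  assumes G: "G \<subseteq> pairs n" and gi: "x < card (initial_vertices n G)" and gt: "y < card (terminal_vertices n G)"
    and x: "0 < x"
  shows "allowed n x y G = pairs n - G \<and> \<not> is_tdg n x y G \<and> pairs n - G \<noteq> {}"
proof (intro conjI)
  have fi: "finite (initial_vertices n G)" "finite (terminal_vertices n G)"
    unfolding initial_vertices_def terminal_vertices_def by auto
  show "allowed n x y G = pairs n - G"
  proof -
    have "x \<le> card (initial_vertices n (insert e G)) \<and> y \<le> card (terminal_vertices n (insert e G))" for e
    proof -
      obtain a b where e: "e = (a,b)" by force
      have "card (initial_vertices n G) - 1 \<le> card (initial_vertices n G - {b})" using diff_card_le_card_Diff[of "{b}" "initial_vertices n G"] by simp
      moreover have "card (terminal_vertices n G) - 1 \<le> card (terminal_vertices n G - {a})" using diff_card_le_card_Diff[of "{a}" "terminal_vertices n G"] by simp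
      ultimately show ?thesis using gi gt unfolding e init_insert term_insert by linarith
    qed
    then show ?thesis unfolding allowed_def by auto
  qed
  show "\<not> is_tdg n x y G" using gi unfolding is_tdg_def by auto
  show "pairs n - G \<noteq> {}"
  proof
    assume "pairs n - G = {}"
    then have "pairs n \<subseteq> G" by auto
    have "v \<in> {1}" if v: "v \<in> initial_vertices n G" for v
    proof (rule ccontr)
      assume "v \<notin> {1}"
      then have "(1, v) \<in> pairs n" using v unfolding initial_vertices_def pairs_def by auto
      then show False using v \<open>pairs n \<subseteq> G\<close> unfolding initial_vertices_def by auto
    qed
    then have "initial_vertices n G \<subseteq> {1}" by blast
    then have "card (initial_vertices n G) \<le> card {1::nat}" by (intro card_mono) auto
    then show False using gi x by simp
  qed
qed

lemma nongood_small:
  assumes "\<not> (x < card (initial_vertices n G) \<and> y < card (terminal_vertices n G))"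
  shows "card (isolated_vertices n G) \<le> max x y"
proof -
  have fi: "finite (initial_vertices n G)" "finite (terminal_vertices n G)"
    unfolding initial_vertices_def terminal_vertices_def by auto
  have "card (isolated_vertices n G) \<le> card (initial_vertices n G)"
       "card (isolated_vertices n G) \<le> card (terminal_vertices n G)"
    unfolding isolated_vertices_def by (auto intro!: card_mono fi)
  then show ?thesis using assms by auto
qed


lemma main_ind:
  fixes n x y m0 :: nat and K :: real
  defines "K \<equiv> real (max x y)" and "kk \<equiv> max x y + 1" and "Nm \<equiv> card (pairs n)"
  defines "\<rho> \<equiv> 1 - real (n - 1) / real Nm" and "D \<equiv> real Nm - real m0" and "M \<equiv> real (2 * kk^2)"
  defines "h \<equiv> \<lambda>G. if m0 \<le> card G then real (card (isolated_vertices n G))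
      else if marked n kk G then K + real (card (isolated_vertices n G)) * \<rho> ^ (m0 - card G)
      else real (card (isolated_vertices n G)) * \<rho> ^ (m0 - card G) + K * M * real (m0 - card G) / D"
  assumes x: "0 < x" and y: "0 < y" and kkn: "kk \<le> n" and m0N: "m0 < Nm" and n2: "2 \<le> n"
  shows "G \<subseteq> pairs n \<Longrightarrow> Nm \<le> kb + card G \<Longrightarrow>
    measure_pmf.expectation (run n x y kb G) (\<lambda>G. real (card (isolated_vertices n G))) \<le> h G"
proof (induction kb arbitrary: G)
  let ?F = "\<lambda>G. real (card (isolated_vertices n G))"
  have Nm2: "2 * Nm = n * (n - 1)" unfolding Nm_def by (rule card_pairs)
  have Npos: "0 < Nm" using m0N by simp
  have rho_eq: "\<rho> = 1 - 2 / real n"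
  proof -
    have "real (2 * Nm) = real n * real (n - 1)" using Nm2 by (metis of_nat_mult)
    then have "real (n - 1) / real Nm = 2 / real n" using n2 Npos by (simp add: field_simps)
    then show ?thesis unfolding \<rho>_def by simp
  qed
  have rho0: "0 \<le> \<rho>" using n2 unfolding rho_eq by (simp add: field_simps)
  have rho1: "\<rho> \<le> 1" using n2 unfolding rho_eq by simp
  have Dpos: "0 < D" unfolding D_def using m0N by simp
  have K0: "0 \<le> K" "0 \<le> M" unfolding K_def M_def by auto
  have kkx: "x < kk" "y < kk" unfolding kk_def by auto
  have caseA: "measure_pmf.expectation (run n x y k G) ?F \<le> h G" if "m0 \<le> card G" for k G
    using exp_run_le_f[of n x y k G] that unfolding h_def by simp
  have caseB: "measure_pmf.expectation (run n x y k G) ?F \<le> h G"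
    if "\<not> (x < card (initial_vertices n G) \<and> y < card (terminal_vertices n G))" "card G < m0" for k G
  proof -
    have mk: "marked n kk G" using unmarked_good[OF kkn, of G] that(1) kkx by linarith
    have "measure_pmf.expectation (run n x y k G) ?F \<le> ?F G" by (rule exp_run_le_f)
    also have "\<dots> \<le> K" using nongood_small[OF that(1)] unfolding K_def by simp
    also have "\<dots> \<le> h G" unfolding h_def using mk K0 rho0 that(2) by auto
    finally show ?thesis .
  qed
  {
    case 0
    show ?case
    proof (cases "m0 \<le> card G \<or> \<not> (x < card (initial_vertices n G) \<and> y < card (terminal_vertices n G))")
      case True then show ?thesis using caseA caseB by (meson not_le)
    next
      case False
      then have "pairs n - G \<noteq> {}" using good_step[OF 0(1) _ _ x] by blast
      moreover have "card G \<le> Nm" using 0 finite_pairs unfolding Nm_def by (simp add: card_mono)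
      moreover have "Nm \<le> card G" using 0(2) by simp
      ultimately have "card G = card (pairs n)" unfolding Nm_def by simp
      then have "G = pairs n" using 0(1) finite_pairs by (simp add: card_subset_eq)
      then show ?thesis using \<open>pairs n - G \<noteq> {}\<close> by simp
    qed
  next
    case (Suc kb)
    show ?case
    proof (cases "m0 \<le> card G \<or> \<not> (x < card (initial_vertices n G) \<and> y < card (terminal_vertices n G))")
      case True then show ?thesis using caseA caseB by (meson not_le)
    next
      case False
      let ?A = "pairs n - G"
      let ?c = "card G"
      have cm: "?c < m0" and gi: "x < card (initial_vertices n G)" and gt: "y < card (terminal_vertices n G)"
        using False by auto
      note gs = good_step[OF Suc(2) gi gt x]
      have finA: "finite ?A" using finite_pairs by auto
      have finG: "finite G" using Suc(2) finite_pairs finite_subset by blast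
      have run_eq: "run n x y (Suc kb) G = pmf_of_set ?A \<bind> (\<lambda>e. run n x y kb (insert e G))"
        using gs by simp
      have finS: "finite (set_pmf (run n x y kb (insert e G)))" if "e \<in> ?A" for e
      proof -
        have "set_pmf (run n x y kb (insert e G)) \<subseteq> Pow (pairs n)"
          using set_run[of n x y kb "insert e G"] that Suc(2) by auto
        then show ?thesis using finite_pairs by (meson finite_Pow_iff finite_subset)
      qed
      have cardA: "card ?A = Nm - ?c" unfolding Nm_def using Suc(2) finG by (simp add: card_Diff_subset)
      have Apos: "0 < card ?A" using gs finA by (simp add: card_gt_0_iff)
      define a where "a = real (card ?A)"
      have apos: "0 < a" using Apos unfolding a_def by simp
      have aN: "a \<le> real Nm" unfolding a_def cardA by simp
      have Da: "D \<le> a" unfolding a_def cardA D_def using cm by simp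
      have IH: "measure_pmf.expectation (run n x y kb (insert e G)) ?F \<le> h (insert e G)" if "e \<in> ?A" for e
      proof (rule Suc.IH)
        show "insert e G \<subseteq> pairs n" using that Suc(2) by auto
        show "Nm \<le> kb + card (insert e G)" using Suc(3) that finG by simp
      qed
      define r where "r = \<rho> ^ (m0 - ?c - 1)"
      have r0: "0 \<le> r" unfolding r_def using rho0 by simp
      have rr: "\<rho> ^ (m0 - ?c) = r * \<rho>" unfolding r_def using cm
        by (metis Suc_diff_Suc diff_Suc_1 mult.commute power_Suc)
      define ins where "ins = (\<lambda>e::nat\<times>nat. snd e \<le> kk \<or> n + 1 \<le> fst e + kk)"
      define hb where "hb = (\<lambda>e. ?F (insert e G) * r + (if marked n kk G \<or> ins e then K else 0)
          + (if marked n kk G then 0 else K * M * real (m0 - ?c - 1) / D))"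
      have hbnd: "h (insert e G) \<le> hb e" if "e \<in> ?A" for e
      proof -
        have ci: "card (insert e G) = ?c + 1" using that finG by simp
        have mi: "marked n kk (insert e G) = (marked n kk G \<or> ins e)"
          unfolding marked_def ins_def by auto
        show ?thesis
        proof (cases "m0 \<le> ?c + 1")
          case True
          then have "m0 - ?c - 1 = 0" by simp
          then show ?thesis unfolding h_def hb_def r_def ci using True K0 Dpos by auto
        next
          case False
          then have e1: "m0 - card (insert e G) = m0 - ?c - 1" using ci by simp
          have nn: "0 \<le> K * M * real (m0 - ?c - 1) / D" using K0 Dpos by simp
          show ?thesis unfolding h_def hb_def mi e1 using False ci r_def nn K0 by (simp del: of_nat_diff)
        qed
      qed
      have sumF: "(\<Sum>e\<in>?A. ?F (insert e G)) \<le> ?F G * a * \<rho>"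
      proof -
        have "(\<Sum>e\<in>?A. ?F (insert e G)) = ?F G * (a - real (n - 1))"
          using sum_iso[OF Suc(2)] unfolding a_def .
        also have "\<dots> \<le> ?F G * (a * \<rho>)"
        proof (rule mult_left_mono)
          have "a * (real (n - 1) / real Nm) \<le> real Nm * (real (n - 1) / real Nm)"
            using aN by (intro mult_right_mono) auto
          also have "\<dots> = real (n - 1)" using Npos by simp
          finally show "a - real (n - 1) \<le> a * \<rho>" unfolding \<rho>_def by (simp add: algebra_simps)
        qed simp
        finally show ?thesis by (simp add: mult.assoc)
      qed
      have cnt: "card {e\<in>?A. ins e} \<le> 2 * kk^2"
      proof -
        have "{e\<in>?A. ins e} \<subseteq> {e\<in>pairs n. snd e \<le> kk \<or> n + 1 \<le> fst e + kk}" unfolding ins_def by auto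
        then have "card {e\<in>?A. ins e} \<le> card {e\<in>pairs n. snd e \<le> kk \<or> n + 1 \<le> fst e + kk}"
          using finite_pairs by (intro card_mono) auto
        then show ?thesis using card_marked_pairs[of n kk] by linarith
      qed
      have sum_hb: "(\<Sum>e\<in>?A. hb e) \<le> a * h G"
      proof (cases "marked n kk G")
        case True
        have "(\<Sum>e\<in>?A. hb e) = (\<Sum>e\<in>?A. ?F (insert e G)) * r + a * K"
          unfolding hb_def a_def using True by (simp add: sum.distrib sum_distrib_right)
        also have "\<dots> \<le> ?F G * a * \<rho> * r + a * K" using sumF r0 by (simp add: mult_right_mono)
        also have "\<dots> = a * h G" unfolding h_def using True cm rr by (simp add: algebra_simps)
        finally show ?thesis .
      next
        case mk: False
        have s2: "(\<Sum>e\<in>?A. (if ins e then K else 0)) = K * real (card {e\<in>?A. ins e})"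
          using finA by (simp add: sum.If_cases Int_def conj_commute)
        have "(\<Sum>e\<in>?A. hb e) = (\<Sum>e\<in>?A. ?F (insert e G)) * r + (\<Sum>e\<in>?A. (if ins e then K else 0))
            + a * (K * M * real (m0 - ?c - 1) / D)"
          unfolding hb_def a_def using mk by (simp add: sum.distrib sum_distrib_right)
        also have "\<dots> \<le> ?F G * a * \<rho> * r + K * M + a * (K * M * real (m0 - ?c - 1) / D)"
        proof -
          have "K * real (card {e\<in>?A. ins e}) \<le> K * M"
          proof (rule mult_left_mono)
            show "real (card {e\<in>?A. ins e}) \<le> M" unfolding M_def using cnt by (metis of_nat_le_iff)
          qed (use K0 in auto)
          then show ?thesis using sumF r0 s2 by (simp add: mult_right_mono add_mono)
        qed
        also have "\<dots> \<le> a * h G"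
        proof -
          have m1: "real (m0 - ?c) = real (m0 - ?c - 1) + 1" using cm by simp
          have "K * M \<le> a * (K * M / D)"
          proof -
            have "K * M = D * (K * M / D)" using Dpos by simp
            also have "\<dots> \<le> a * (K * M / D)" using Da K0 Dpos by (intro mult_right_mono) auto
            finally show ?thesis .
          qed
          moreover have "h G = ?F G * (r * \<rho>) + K * M * (real (m0 - ?c - 1) + 1) / D"
            unfolding h_def using mk cm rr m1 by simp
          moreover have "a * (K * M * (real (m0 - ?c - 1) + 1) / D) = a * (K * M * real (m0 - ?c - 1) / D) + a * (K * M / D)"
            using Dpos by (simp add: field_simps)
          ultimately show ?thesis by (simp add: algebra_simps)
        qed
        finally show ?thesis .
      qed
      have "measure_pmf.expectation (run n x y (Suc kb) G) ?F
          = (\<Sum>e\<in>?A. measure_pmf.expectation (run n x y kb (insert e G)) ?F / a)"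
        unfolding run_eq a_def using gs finA finS
        by (subst pmf_expectation_bind_pmf_of_set) (auto simp: divide_inverse_commute)
      also have "\<dots> \<le> (\<Sum>e\<in>?A. hb e / a)"
      proof (intro sum_mono divide_right_mono)
        fix e assume "e \<in> ?A"
        then show "measure_pmf.expectation (run n x y kb (insert e G)) ?F \<le> hb e"
          using IH hbnd order_trans by blast
      qed (use apos in simp)
      also have "\<dots> = (\<Sum>e\<in>?A. hb e) / a" by (simp add: sum_divide_distrib)
      also have "\<dots> \<le> h G" using sum_hb apos by (simp add: divide_le_eq mult.commute)
      finally show ?thesis .
    qed
  }
qed




lemma iso_empty: "isolated_vertices n {} = {1..n}"
  unfolding isolated_vertices_def initial_vertices_def terminal_vertices_def by auto

lemma bound_n:
  fixes x y n :: nat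
  assumes x: "0 < x" and y: "0 < y" and kkn: "max x y + 1 \<le> real n" and n2: "2 \<le> real n"
    and Dp: "0 < real n * (real n - 1) / 2 - real n * (ln (real n) + 1)"
  shows "measure_pmf.expectation (final_graph n x y) (\<lambda>G. real (card (isolated_vertices n G)))
    \<le> 1 / real n + real (max x y) * real (2 * (max x y + 1)^2) * (real n * (ln (real n) + 1)) /
         (real n * (real n - 1) / 2 - real n * (ln (real n) + 1))"
proof -
  define s where "s = nat \<lceil>ln (real n)\<rceil>"
  define m0 where "m0 = n * s"
  define Nm where "Nm = card (pairs n)"
  define K where "K = real (max x y)"
  define M where "M = real (2 * (max x y + 1)^2)"
  define \<rho> where "\<rho> = 1 - real (n - 1) / real Nm"
  define D where "D = real Nm - real m0"
  have npos: "0 < real n" using n2 by simp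
  have Nm2: "2 * Nm = n * (n - 1)" unfolding Nm_def by (rule card_pairs)
  have Nmr: "real Nm = real n * (real n - 1) / 2"
  proof -
    have "real (2 * Nm) = real n * real (n - 1)" using Nm2 by (metis of_nat_mult)
    then show ?thesis using n2 by (simp add: of_nat_diff)
  qed
  have lnpos: "0 \<le> ln (real n)" using n2 by simp
  have s_ge: "ln (real n) \<le> real s" unfolding s_def using lnpos by linarith
  have s_le: "real s \<le> ln (real n) + 1" unfolding s_def using lnpos by linarith
  have m0le: "real m0 \<le> real n * (ln (real n) + 1)" unfolding m0_def using s_le npos by simp
  have Dge: "real n * (real n - 1) / 2 - real n * (ln (real n) + 1) \<le> D" unfolding D_def Nmr using m0le by simp
  have Dpos: "0 < D" using Dp Dge by linarith
  have m0N: "m0 < Nm" using Dpos unfolding D_def by simp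
  have Npos: "0 < Nm" using m0N by simp
  have rho_eq: "\<rho> = 1 - 2 / real n"
  proof -
    have "real (n - 1) / real Nm = 2 / real n" using Nmr n2 npos Npos by (simp add: field_simps of_nat_diff)
    then show ?thesis unfolding \<rho>_def by simp
  qed
  have rho0: "0 \<le> \<rho>" using n2 unfolding rho_eq by (simp add: field_simps)
  have spos: "0 < s" using s_ge n2 by (smt (verit) ln_le_zero_iff of_nat_0_less_iff)
  then have m0pos: "0 < m0" unfolding m0_def using npos by simp
  have mi: "measure_pmf.expectation (run n x y Nm {}) (\<lambda>G. real (card (isolated_vertices n G)))
     \<le> real n * \<rho> ^ m0 + K * M * real m0 / D"
  proof -
    have kk: "max x y + 1 \<le> n" using kkn by linarith
    have n2': "2 \<le> n" using n2 by linarith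
    note mm = main_ind[where ?m0.0 = m0 and n = n and x = x and y = y and G = "{}" and kb = Nm, OF x y kk _ n2']
    show ?thesis using mm m0N m0pos unfolding K_def M_def \<rho>_def D_def Nm_def by (simp add: iso_empty marked_def)
  qed
  have "measure_pmf.expectation (final_graph n x y) (\<lambda>G. real (card (isolated_vertices n G)))
     \<le> real n * \<rho> ^ m0 + K * M * real m0 / D" using mi unfolding final_graph_def Nm_def .
  also have "\<dots> \<le> 1 / real n + K * M * (real n * (ln (real n) + 1)) /
         (real n * (real n - 1) / 2 - real n * (ln (real n) + 1))"
  proof (rule add_mono)
    have "\<rho> ^ m0 \<le> exp (- 2 / real n) ^ m0"
      using rho0 by (intro power_mono) (use exp_ge_add_one_self[of "-2 / real n"] rho_eq in auto)
    also have "\<dots> = exp (- 2 * real s)"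
      unfolding m0_def using npos by (simp add: exp_of_nat_mult[symmetric])
    also have "\<dots> \<le> exp (- 2 * ln (real n))" using s_ge by simp
    also have "\<dots> = 1 / (real n)^2"
    proof -
      have "exp (- 2 * ln (real n)) = inverse (exp (ln (real n)) * exp (ln (real n)))"
        by (simp add: exp_minus[symmetric] exp_add[symmetric])
      then show ?thesis using npos by (simp add: power2_eq_square divide_inverse)
    qed
    finally have "real n * \<rho> ^ m0 \<le> real n * (1 / (real n)^2)" using npos by (intro mult_left_mono) auto
    then show "real n * \<rho> ^ m0 \<le> 1 / real n" using npos by (simp add: power2_eq_square)
  next
    have KM: "0 \<le> K * M" unfolding K_def M_def by simp
    have "K * M * real m0 / D \<le> K * M * (real n * (ln (real n) + 1)) / D"
      using KM m0le Dpos by (intro divide_right_mono mult_left_mono) auto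
    also have "\<dots> \<le> K * M * (real n * (ln (real n) + 1)) / (real n * (real n - 1) / 2 - real n * (ln (real n) + 1))"
    proof (rule divide_left_mono)
      show "0 \<le> K * M * (real n * (ln (real n) + 1))" using KM lnpos npos by simp
      show "0 < D * (real n * (real n - 1) / 2 - real n * (ln (real n) + 1))" using Dpos Dp by simp
    qed (use Dge in simp)
    finally show "K * M * real m0 / D \<le> K * M * (real n * (ln (real n) + 1)) / (real n * (real n - 1) / 2 - real n * (ln (real n) + 1))" .
  qed
  finally show ?thesis unfolding K_def M_def .
qed

theorem mainTheorem17:
  fixes x y :: nat
  assumes "0 < x" and "0 < y"
  shows "(\<lambda>n. measure_pmf.expectation (final_graph n x y)
            (\<lambda>G. real (card (isolated_vertices n G)))) \<longlonglongrightarrow> 0"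
proof (rule tendsto_sandwich)
  define C where "C = real (max x y) * real (2 * (max x y + 1)^2)"
  let ?g = "\<lambda>n::nat. 1 / real n + C * (real n * (ln (real n) + 1)) / (real n * (real n - 1) / 2 - real n * (ln (real n) + 1))"
  show "eventually (\<lambda>n. (0::real) \<le> measure_pmf.expectation (final_graph n x y)
            (\<lambda>G. real (card (isolated_vertices n G)))) sequentially"
    by (intro always_eventually allI integral_nonneg_AE) auto
  have e1: "eventually (\<lambda>n::nat. 0 < real n * (real n - 1) / 2 - real n * (ln (real n) + 1)) sequentially"
    by real_asymp
  have e2: "eventually (\<lambda>n::nat. real (max x y) + 1 \<le> real n) sequentially"
    by real_asymp
  have e3: "eventually (\<lambda>n::nat. 2 \<le> real n) sequentially" by real_asymp
  show "eventually (\<lambda>n. measure_pmf.expectation (final_graph n x y)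
            (\<lambda>G. real (card (isolated_vertices n G))) \<le> ?g n) sequentially"
    using e1 e2 e3
  proof eventually_elim
    case (elim n)
    then show ?case using bound_n[OF assms, of n] unfolding C_def by (simp add: mult.assoc)
  qed
  show "(\<lambda>n. 0) \<longlonglongrightarrow> (0::real)" by simp
  show "?g \<longlonglongrightarrow> 0" by real_asymp
qed

end
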